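(* Let $W_1(u)=\sum_{k\ge0}\omega_ku^{-k}$. Let $A'\in\mathrm{Seq}_{r,t}$ with $a'_1=-1$, $a'_2=1$. Then in $\operatorname{End}(A')[[u^{-1}]]$ $$e_1^{(A')}\frac{1}{u-y_1}e_1^{(A')}=\frac{W_1^*(u)}{u}e_1^{(A')},\qquad\text{where}\qquad \frac{W^*_1(u)}{u}=\frac{W_1(-u)}{u-W_1(-u)}.$$
   Context: Let $r,t\in\mathbb N$. An $(r,t)$-sequence is a sequence $A=(a_1,\dots,a_{r+t})$ that is a permutation of $(1,\dots,1,-1,\dots,-1)$ ($r$ entries $1$, $t$ entries $-1$); $\mathrm{Seq}_{r,t}$ is the set of these, and the simple transpositions $\mathsf s_j=(j,j+1)$ of $S_{r+t}$ act on it by permuting entries. Fix complex numbers $\boldsymbol\omega=(\omega_k)_{k\in\mathbb N}$. The degenerate affine walled Brauer category $\underline{\mathrm{VB}}_{r,t}(\boldsymbol\omega)$ is the $\mathbb C$-linear category with object set $\mathrm{Seq}_{r,t}$ whose morphisms are generated by: endomorphisms $s_i^{(A)}$ of $A$ for $1\le i\le r+t-1$ with $a_i=a_{i+1}$; endomorphisms $e_i^{(A)}$ of $A$ for $1\le i\le r+t-1$ with $a_i\neq a_{i+1}$; endomorphisms $y_i^{(A)}$ of $A$ for $1\le i\le r+t$; and morphisms $\hat s_j^{(A)},\hat e_j^{(A)}:A\to\mathsf s_jA$ whenever $\mathsf s_jA\ne A$. Superscripts are usually omitted; composition $fg$ means $g$ first. A symbol $\dot s_i$ stands for $s_i$ or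 $\hat s_i$ and $\dot e_i$ for $e_i$ or $\hat e_i$; each relation is imposed for all objects and all choices of dotted symbols (possibly different on the two sides) for which both sides are defined morphisms with the same source and target. Relations: (1) $\dot s_i\dot s_i=1$; (2) $\dot s_i\dot s_j=\dot s_j\dot s_i$ for $|i-j|>1$, $\dot s_i\dot s_{i+1}\dot s_i=\dot s_{i+1}\dot s_i\dot s_{i+1}$, $\dot s_iy_j=y_j\dot s_i$ for $j\ne i,i+1$; (3) $(e_i^{(A)})^2=\omega_0e_i^{(A)}$; (4) $e_1^{(A)}y_1^ke_1^{(A)}=\omega_ke_1^{(A)}$ for all $k\in\mathbb N$ when $a_1=1,a_2=-1$; (5) $\dot s_i\dot e_j=\dot e_j\dot s_i$ and $\dot e_i\dot e_j=\dot e_j\dot e_i$ for $|i-j|>1$, $\dot e_iy_j=y_j\dot e_i$ for $j\neq i,i+1$, $y_iy_j=y_jy_i$; (6) $\hat s_i\dot e_i=\dot e_i=\dot e_i\hat s_i$, $\dot s_i\dot e_{i+1}\dot e_i=\dot s_{i+1}\dot e_i$, $\dot e_i\dot e_{i+1}\dot s_i=\dot e_i\dot s_{i+1}$, $\dot e_{i+1}\dot e_i\dot s_{i+1}=\dot e_{i+1}\dot s_i$, $\dot s_{i+1}\dot e_i\dot e_{i+1}=\dot s_i\dot e_{i+1}$, $\dot e_{i+1}\dot e_i\dot e_{i+1}=\dot e_{i+1}$, $\dot e_i\dot e_{i+1}\dot e_i=\dot e_i$; (7) $s_iy_i-y_{i+1}s_i=-1$, $s_iy_{i+1}-y_is_i=1$,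 $\hat s_iy_i-y_{i+1}\hat s_i=\hat e_i$, $\hat s_iy_{i+1}-y_i\hat s_i=-\hat e_i$; (8) $\dot e_i(y_i+y_{i+1})=0=(y_i+y_{i+1})\dot e_i$. Power series: $u$ is a formal variable; one works in $\operatorname{End}(A)[[u^{-1}]]$, with $\frac1{u-y}:=\sum_{k\ge0}y^ku^{-k-1}$; $f(-u)$ denotes substitution $u\mapsto-u$, and quotients are expanded as power series in $u^{-1}$. *)

theory Defs
  imports "HOL-Computational_Algebra.Formal_Power_Series"
begin

definition Seq :: "nat \<Rightarrow> nat \<Rightarrow> int list set" where
  "Seq r t = {A. length A = r + t \<and> set A \<subseteq> {1, -1} \<and> length (filter (\<lambda>x. x = 1) A) = r}"

definition ent :: "int list \<Rightarrow> nat \<Rightarrow> int" where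
  "ent A i = A ! (i - 1)"

text \<open>action of the simple transposition (j, j+1) (1-based) on a sequence\<close>
definition swp :: "nat \<Rightarrow> int list \<Rightarrow> int list" where
  "swp j A = A[j - 1 := A ! j, j := A ! (j - 1)]"

text \<open>A C-linear category with the finite object set Seq r t is encoded by an algebra
  (a ring with a central ring homomorphism from the complex numbers) together with
  idempotents idm A (the identities 1_A); a morphism A -> B is an element f with
  idm B * f * idm A = f, and composition is multiplication.\<close>

record 'a vbgens =
  idm :: "int list \<Rightarrow> 'a"
  gs  :: "int list \<Rightarrow> nat \<Rightarrow> 'a"
  ge  :: "int list \<Rightarrow> nat \<Rightarrow> 'a"
  gy  :: "int list \<Rightarrow> nat \<Rightarrow> 'a"
  gsh :: "int list \<Rightarrow> nat \<Rightarrow> 'a"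
  geh :: "int list \<Rightarrow> nat \<Rightarrow> 'a"

text \<open>Letters of words: S = dotted s, Sp = plain s, Sh = hat s, likewise for e; Y = y.\<close>
datatype letter = S nat | Sp nat | Sh nat | E nat | Ep nat | Eh nat | Y nat

definition stepSp :: "'a vbgens \<Rightarrow> int list \<Rightarrow> nat \<Rightarrow> (int list \<times> 'a) set" where
  "stepSp G A i = (if 1 \<le> i \<and> i < length A \<and> ent A i = ent A (i + 1)
                   then {(A, gs G A i)} else {})"
definition stepSh :: "'a vbgens \<Rightarrow> int list \<Rightarrow> nat \<Rightarrow> (int list \<times> 'a) set" where
  "stepSh G A i = (if 1 \<le> i \<and> i < length A \<and> ent A i \<noteq> ent A (i + 1)
                   then {(swp i A, gsh G A i)} else {})"
definition stepEp :: "'a vbgens \<Rightarrow> int list \<Rightarrow> nat \<Rightarrow> (int list \<times> 'a) set" where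
  "stepEp G A i = (if 1 \<le> i \<and> i < length A \<and> ent A i \<noteq> ent A (i + 1)
                   then {(A, ge G A i)} else {})"
definition stepEh :: "'a vbgens \<Rightarrow> int list \<Rightarrow> nat \<Rightarrow> (int list \<times> 'a) set" where
  "stepEh G A i = (if 1 \<le> i \<and> i < length A \<and> ent A i \<noteq> ent A (i + 1)
                   then {(swp i A, geh G A i)} else {})"

text \<open>All generators of the given letter with source A, as pairs (target, morphism).\<close>
fun step :: "'a vbgens \<Rightarrow> int list \<Rightarrow> letter \<Rightarrow> (int list \<times> 'a) set" where
  "step G A (Sp i) = stepSp G A i"
| "step G A (Sh i) = stepSh G A i"
| "step G A (S i) = stepSp G A i \<union> stepSh G A i"
| "step G A (Ep i) = stepEp G A i"
| "step G A (Eh i) = stepEh G A i"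
| "step G A (E i) = stepEp G A i \<union> stepEh G A i"
| "step G A (Y i) = (if 1 \<le> i \<and> i \<le> length A then {(A, gy G A i)} else {})"

text \<open>All defined composites along a word given in order of application (first letter first).\<close>
fun paths :: "'a::times vbgens \<Rightarrow> int list \<Rightarrow> letter list \<Rightarrow> (int list \<times> 'a) set" where
  "paths G A [] = {(A, idm G A)}"
| "paths G A (x # xs) = {(C, g * f) | B f C g. (B, f) \<in> step G A x \<and> (C, g) \<in> paths G B xs}"

text \<open>Composites of a word written in the usual order (rightmost letter applied first).\<close>
definition comp :: "'a::times vbgens \<Rightarrow> int list \<Rightarrow> letter list \<Rightarrow> (int list \<times> 'a) set" where
  "comp G A w = paths G A (rev w)"

text \<open>Relation w1 = w2, imposed for all objects and all choices of dotted symbols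
  for which both sides are defined with the same source and target.\<close>
definition rel :: "'a::times vbgens \<Rightarrow> nat \<Rightarrow> nat \<Rightarrow> letter list \<Rightarrow> letter list \<Rightarrow> bool" where
  "rel G r t w1 w2 \<longleftrightarrow> (\<forall>A\<in>Seq r t. \<forall>B f C g. (B, f) \<in> comp G A w1 \<longrightarrow> (C, g) \<in> comp G A w2
       \<longrightarrow> B = C \<longrightarrow> f = g)"

definition mor :: "'a::times vbgens \<Rightarrow> int list \<Rightarrow> int list \<Rightarrow> 'a \<Rightarrow> bool" where
  "mor G A B f \<longleftrightarrow> idm G B * f * idm G A = f"

text \<open>c is the C-algebra structure (central unital ring homomorphism); G satisfies all
  defining relations of the degenerate affine walled Brauer category VB_{r,t}(omega).\<close>
definition is_VB :: "nat \<Rightarrow> nat \<Rightarrow> (nat \<Rightarrow> complex) \<Rightarrow> (complex \<Rightarrow> 'a::ring_1) \<Rightarrow> 'a vbgens \<Rightarrow> bool" where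
  "is_VB r t \<omega> c G \<longleftrightarrow>
    \<comment> \<open>C-linear structure\<close>
    (\<forall>a b. c (a + b) = c a + c b) \<and> (\<forall>a b. c (a * b) = c a * c b) \<and> c 1 = 1 \<and>
    (\<forall>a x. c a * x = x * c a) \<and>
    \<comment> \<open>identities of objects\<close>
    (\<forall>A\<in>Seq r t. idm G A * idm G A = idm G A) \<and>
    (\<forall>A\<in>Seq r t. \<forall>B\<in>Seq r t. A \<noteq> B \<longrightarrow> idm G A * idm G B = 0) \<and>
    \<comment> \<open>sources and targets of generators\<close>
    (\<forall>A\<in>Seq r t. \<forall>x B f. (B, f) \<in> step G A x \<longrightarrow> mor G A B f) \<and>
    \<comment> \<open>(1)\<close>
    (\<forall>i. rel G r t [S i, S i] []) \<and>
    \<comment> \<open>(2)\<close>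
    (\<forall>i j. (i + 1 < j \<or> j + 1 < i) \<longrightarrow> rel G r t [S i, S j] [S j, S i]) \<and>
    (\<forall>i. rel G r t [S i, S (i + 1), S i] [S (i + 1), S i, S (i + 1)]) \<and>
    (\<forall>i j. j \<noteq> i \<and> j \<noteq> i + 1 \<longrightarrow> rel G r t [S i, Y j] [Y j, S i]) \<and>
    \<comment> \<open>(3)\<close>
    (\<forall>A\<in>Seq r t. \<forall>i. 1 \<le> i \<and> i < length A \<and> ent A i \<noteq> ent A (i + 1) \<longrightarrow>
        ge G A i * ge G A i = c (\<omega> 0) * ge G A i) \<and>
    \<comment> \<open>(4)\<close>
    (\<forall>A\<in>Seq r t. 2 \<le> length A \<and> ent A 1 = 1 \<and> ent A 2 = -1 \<longrightarrow>
        (\<forall>k. ge G A 1 * gy G A 1 ^ k * ge G A 1 = c (\<omega> k) * ge G A 1)) \<and>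
    \<comment> \<open>(5)\<close>
    (\<forall>i j. (i + 1 < j \<or> j + 1 < i) \<longrightarrow> rel G r t [S i, E j] [E j, S i]) \<and>
    (\<forall>i j. (i + 1 < j \<or> j + 1 < i) \<longrightarrow> rel G r t [E i, E j] [E j, E i]) \<and>
    (\<forall>i j. j \<noteq> i \<and> j \<noteq> i + 1 \<longrightarrow> rel G r t [E i, Y j] [Y j, E i]) \<and>
    (\<forall>i j. rel G r t [Y i, Y j] [Y j, Y i]) \<and>
    \<comment> \<open>(6)\<close>
    (\<forall>i. rel G r t [Sh i, E i] [E i]) \<and>
    (\<forall>i. rel G r t [E i, Sh i] [E i]) \<and>
    (\<forall>i. rel G r t [S i, E (i + 1), E i] [S (i + 1), E i]) \<and>
    (\<forall>i. rel G r t [E i, E (i + 1), S i] [E i, S (i + 1)]) \<and>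
    (\<forall>i. rel G r t [E (i + 1), E i, S (i + 1)] [E (i + 1), S i]) \<and>
    (\<forall>i. rel G r t [S (i + 1), E i, E (i + 1)] [S i, E (i + 1)]) \<and>
    (\<forall>i. rel G r t [E (i + 1), E i, E (i + 1)] [E (i + 1)]) \<and>
    (\<forall>i. rel G r t [E i, E (i + 1), E i] [E i]) \<and>
    \<comment> \<open>(7)\<close>
    (\<forall>A\<in>Seq r t. \<forall>i. 1 \<le> i \<and> i < length A \<and> ent A i = ent A (i + 1) \<longrightarrow>
        gs G A i * gy G A i - gy G A (i + 1) * gs G A i = - idm G A \<and>
        gs G A i * gy G A (i + 1) - gy G A i * gs G A i = idm G A) \<and>
    (\<forall>A\<in>Seq r t. \<forall>i. 1 \<le> i \<and> i < length A \<and> ent A i \<noteq> ent A (i + 1) \<longrightarrow>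
        gsh G A i * gy G A i - gy G (swp i A) (i + 1) * gsh G A i = geh G A i \<and>
        gsh G A i * gy G A (i + 1) - gy G (swp i A) i * gsh G A i = - geh G A i) \<and>
    \<comment> \<open>(8)\<close>
    (\<forall>A\<in>Seq r t. \<forall>i B f. (B, f) \<in> step G A (E i) \<longrightarrow>
        f * (gy G A i + gy G A (i + 1)) = 0 \<and> (gy G B i + gy G B (i + 1)) * f = 0)"

text \<open>W_1(-u)/u = sum_k omega_k (-1)^k u^{-k-1}, as an fps in x = u^{-1}\<close>
definition W1neg_div_u :: "(nat \<Rightarrow> complex) \<Rightarrow> complex fps" where
  "W1neg_div_u \<omega> = Abs_fps (\<lambda>m. if m = 0 then 0 else (-1) ^ (m - 1) * \<omega> (m - 1))"

text \<open>W_1^*(u)/u = W_1(-u)/(u - W_1(-u)) = (W_1(-u)/u) / (1 - W_1(-u)/u)\<close>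
definition Wstar_div_u :: "(nat \<Rightarrow> complex) \<Rightarrow> complex fps" where
  "Wstar_div_u \<omega> = W1neg_div_u \<omega> * inverse (1 - W1neg_div_u \<omega>)"

end

theory Submission
  imports Defs
begin

lemma alg_expand:
  fixes e y X :: "'a::ring_1" and c :: "complex \<Rightarrow> 'a"
  assumes X: "X = y + e" and ev: "\<And>j. e * y^j * e = c (v j) * e"
  shows "e * y^j * X^k * e = c (v (j+k)) * e + (\<Sum>i<k. c (v (j+i)) * (e * X^(k-1-i) * e))"
proof (induction k arbitrary: j)
  case 0
  then show ?case using ev by simp
next
  case (Suc k)
  have "e * y^j * X^(Suc k) * e = e * y^(Suc j) * X^k * e + (e * y^j * e) * X^k * e"
  proof -
    have "e * y^j * X^(Suc k) * e = e * y^j * (y + e) * X^k * e"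
      by (simp only: power_Suc X mult.assoc)
    also have "\<dots> = e * (y^j * y) * X^k * e + (e * y^j * e) * X^k * e"
      by (simp add: algebra_simps)
    finally show ?thesis by (simp only: power_Suc2[symmetric])
  qed
  also have "\<dots> = c (v (Suc j + k)) * e + (\<Sum>i<k. c (v (Suc j+i)) * (e * X^(k-1-i) * e))
        + c (v j) * (e * X^k * e)"
    using Suc.IH[of "Suc j"] ev[of j] by (simp add: mult.assoc)
  also have "\<dots> = c (v (j + Suc k)) * e + (\<Sum>i<Suc k. c (v (j+i)) * (e * X^(Suc k-1-i) * e))"
    unfolding sum.lessThan_Suc_shift by (simp add: algebra_simps)
  finally show ?case .
qed

lemma c_sum:
  fixes c :: "complex \<Rightarrow> 'a::ring_1"
  assumes add: "\<And>a b. c (a + b) = c a + c b"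
  shows "c (sum f A) = (\<Sum>i\<in>A. c (f i))"
proof -
  have c0: "c 0 = 0" using add[of 0 0] by simp
  show ?thesis
    by (induction A rule: infinite_finite_induct) (simp_all add: c0 add)
qed

lemma alg_main:
  fixes e y X :: "'a::ring_1" and c :: "complex \<Rightarrow> 'a"
  assumes X: "X = y + e" and ev: "\<And>j. e * y^j * e = c (v j) * e"
    and cen: "\<And>a x. c a * x = x * c a" and Sqt: "(Sq :: nat \<Rightarrow> complex) 0 = Sq 0"
    and add: "\<And>a b. c (a + b) = c a + c b" and mul: "\<And>a b. c (a * b) = c a * c b"
    and rec: "\<And>k. Sq (Suc k) = v k + (\<Sum>i<k. v i * Sq (k - i))"
  shows "e * X^k * e = c (Sq (Suc k)) * e"
proof (induction k rule: less_induct)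
  case (less k)
  have "e * X^k * e = e * y^0 * X^k * e" by simp
  also have "\<dots> = c (v k) * e + (\<Sum>i<k. c (v i) * (e * X^(k-1-i) * e))"
    using alg_expand[OF X ev, of 0 k] by simp
  also have "\<dots> = c (v k) * e + (\<Sum>i<k. c (v i * Sq (k - i)) * e)"
  proof -
    have "\<And>i. i < k \<Longrightarrow> c (v i) * (e * X^(k-1-i) * e) = c (v i * Sq (k - i)) * e"
      using less by (simp add: mul mult.assoc Suc_diff_Suc)
    then show ?thesis by simp
  qed
  also have "\<dots> = c (Sq (Suc k)) * e"
    by (simp add: rec add c_sum[OF add] sum_distrib_right distrib_right)
  finally show ?case .
qed

lemma fps_rec:
  "fps_nth (Wstar_div_u \<omega>) (Suc k) = (-1)^k * \<omega> k
     + (\<Sum>i<k. ((-1)^i * \<omega> i) * fps_nth (Wstar_div_u \<omega>) (k - i))"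
  and fps_0: "fps_nth (Wstar_div_u \<omega>) 0 = 0"
proof -
  define w where "w = W1neg_div_u \<omega>"
  define S where "S = Wstar_div_u \<omega>"
  have w0: "fps_nth w 0 = 0" and wS: "\<And>i. fps_nth w (Suc i) = (-1)^i * \<omega> i"
    by (simp_all add: w_def W1neg_div_u_def)
  have S0: "fps_nth S 0 = 0" by (simp add: S_def Wstar_div_u_def w_def[symmetric] w0)
  then show "fps_nth (Wstar_div_u \<omega>) 0 = 0" by (simp add: S_def)
  have "inverse (1 - w) * (1 - w) = 1"
    by (rule inverse_mult_eq_1) (simp add: w0)
  then have "S * (1 - w) = w" by (simp add: S_def Wstar_div_u_def w_def[symmetric] mult.assoc)
  then have "S = w + w * S" by (simp add: algebra_simps)
  then have "fps_nth S (Suc k) = fps_nth w (Suc k) + fps_nth (w * S) (Suc k)" by (metis fps_add_nth)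
  also have "fps_nth (w * S) (Suc k) = (\<Sum>i=0..Suc k. fps_nth w i * fps_nth S (Suc k - i))" by (rule fps_mult_nth)
  also have "\<dots> = (\<Sum>i=0..k. fps_nth w (Suc i) * fps_nth S (k - i))"
    unfolding sum.atLeast0_atMost_Suc_shift by (simp add: w0)
  also have "\<dots> = (\<Sum>i<k. fps_nth w (Suc i) * fps_nth S (k - i))"
    by (simp add: atLeast0AtMost lessThan_Suc_atMost[symmetric] S0)
  finally show "fps_nth (Wstar_div_u \<omega>) (Suc k) = (-1)^k * \<omega> k
     + (\<Sum>i<k. ((-1)^i * \<omega> i) * fps_nth (Wstar_div_u \<omega>) (k - i))"
    by (simp add: S_def wS)
qed

lemma rel_use: "rel G r t w1 w2 \<Longrightarrow> A \<in> Seq r t \<Longrightarrow> (B, f) \<in> comp G A w1 \<Longrightarrow> (B, g) \<in> comp G A w2 \<Longrightarrow> f = g"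
  unfolding rel_def by blast

theorem mainTheorem3:
  fixes r t :: nat and \<omega> :: "nat \<Rightarrow> complex" and c :: "complex \<Rightarrow> 'a::ring_1"
    and G :: "'a vbgens" and A' :: "int list"
  assumes "is_VB r t \<omega> c G"
    and "A' \<in> Seq r t" and "2 \<le> length A'" and "ent A' 1 = -1" and "ent A' 2 = 1"
  shows "\<forall>m. (if m = 0 then 0 else ge G A' 1 * gy G A' 1 ^ (m - 1) * ge G A' 1)
             = c (fps_nth (Wstar_div_u \<omega>) m) * ge G A' 1"
proof -
  note V = assms(1)[unfolded is_VB_def]
  obtain rest where A'eq: "A' = (-1) # 1 # rest"
    using assms(3-5) by (cases A'; cases "tl A'") (auto simp: ent_def)
  define A where "A = (1::int) # (-1) # rest"
  have SA': "A' \<in> Seq r t" by fact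
  have SA: "A \<in> Seq r t" using SA' by (auto simp: A'eq A_def Seq_def)
  have sw1: "swp 1 A' = A" and sw2: "swp 1 A = A'" by (simp_all add: A'eq A_def swp_def)
  have add0: "\<forall>a b. c (a + b) = c a + c b" using V by (elim conjE) assumption
  have mul0: "\<forall>a b. c (a * b) = c a * c b" using V by (elim conjE) assumption
  have c1: "c 1 = 1" using V by (elim conjE) assumption
  have cen0: "\<forall>a x. c a * x = x * c a" using V by (elim conjE) assumption
  note add = add0[rule_format] and mul = mul0[rule_format] and cen = cen0[rule_format]
  have idem0: "\<forall>X\<in>Seq r t. idm G X * idm G X = idm G X" using V by (elim conjE) assumption
  have morst0: "\<forall>X\<in>Seq r t. \<forall>x B f. (B, f) \<in> step G X x \<longrightarrow> mor G X B f" using V by (elim conjE) assumption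
  note idem = idem0[rule_format] and morst = morst0[rule_format]
  have lid: "idm G B * f = f" and rid: "f * idm G X = f"
    if "X \<in> Seq r t" "B \<in> Seq r t" "(B, f) \<in> step G X x" for X B f x
  proof -
    have m: "idm G B * f * idm G X = f" using morst[OF that(1,3)] by (simp add: mor_def)
    show "idm G B * f = f" by (metis m idem[OF that(2)] mult.assoc)
    show "f * idm G X = f" by (metis m idem[OF that(1)] mult.assoc)
  qed
  define s where "s = gsh G A 1"
  define s' where "s' = gsh G A' 1"
  define e where "e = ge G A 1"
  define e' where "e' = ge G A' 1"
  define eh where "eh = geh G A 1"
  define y1 where "y1 = gy G A 1"
  define y2 where "y2 = gy G A 2"
  define y where "y = gy G A' 1"
  have st_s: "(A', s) \<in> step G A (Sh 1)" by (simp add: s_def stepSh_def swp_def A'eq A_def ent_def)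
  have st_s': "(A, s') \<in> step G A' (Sh 1)" by (simp add: s'_def stepSh_def swp_def A_def A'eq ent_def)
  have st_e: "(A, e) \<in> step G A (E 1)" by (simp add: e_def stepEp_def A_def ent_def)
  have st_e': "(A', e') \<in> step G A' (E 1)" by (simp add: e'_def stepEp_def A'eq ent_def)
  have st_eh: "(A', eh) \<in> step G A (E 1)" by (simp add: eh_def stepEh_def swp_def A'eq A_def ent_def)
  have st_y1: "(A, y1) \<in> step G A (Y 1)" by (simp add: y1_def A_def)
  have st_y2: "(A, y2) \<in> step G A (Y 2)" by (simp add: y2_def A_def)
  have R2: "eh * s' = e'"
  proof -
    have r: "rel G r t [E 1, Sh 1] [E 1]"
      using V by (elim conjE) (erule allE, assumption)
    have "(A', (idm G A' * eh) * s') \<in> comp G A' [E 1, Sh 1]"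
      using st_s' st_eh by (auto simp: comp_def)
    moreover have "(A', idm G A' * e') \<in> comp G A' [E 1]"
      using st_e' by (auto simp: comp_def)
    ultimately show ?thesis using rel_use[OF r SA'] lid[OF SA SA' st_eh] lid[OF SA' SA' st_e'] by metis
  qed
  have R3: "s * e = eh"
  proof -
    have r: "rel G r t [Sh 1, E 1] [E 1]"
      using V by (elim conjE) (erule allE, assumption)
    have "(A', (idm G A' * s) * e) \<in> comp G A [Sh 1, E 1]"
      using st_s st_e by (auto simp: comp_def)
    moreover have "(A', idm G A' * eh) \<in> comp G A [E 1]"
      using st_eh by (auto simp: comp_def)
    ultimately show ?thesis using rel_use[OF r SA] lid[OF SA SA' st_s] lid[OF SA SA' st_eh] by metis
  qed
  have R4: "s' * s = idm G A"
  proof -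
    have r: "rel G r t [S 1, S 1] []"
      using V by (elim conjE) (erule allE, assumption)
    have "(A, (idm G A * s') * s) \<in> comp G A [S 1, S 1]"
      using st_s st_s' by (auto simp: comp_def)
    moreover have "(A, idm G A) \<in> comp G A []"
      by (auto simp: comp_def)
    ultimately show ?thesis using rel_use[OF r SA] lid[OF SA' SA st_s'] by metis
  qed
  have R5: "y1 * y2 = y2 * y1"
  proof -
    have r: "rel G r t [Y 1, Y 2] [Y 2, Y 1]"
      using V by (elim conjE) (erule allE, erule allE, assumption)
    have "(A, (idm G A * y1) * y2) \<in> comp G A [Y 1, Y 2]"
      using st_y1 st_y2 by (auto simp: comp_def A_def)
    moreover have "(A, (idm G A * y2) * y1) \<in> comp G A [Y 2, Y 1]"
      using st_y1 st_y2 by (auto simp: comp_def A_def)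
    ultimately show ?thesis using rel_use[OF r SA] lid[OF SA SA st_y1] lid[OF SA SA st_y2] by metis
  qed
  have R7: "s * y2 - y * s = - eh"
  proof -
    have "\<forall>X\<in>Seq r t. \<forall>i. 1 \<le> i \<and> i < length X \<and> ent X i \<noteq> ent X (i + 1) \<longrightarrow>
        gsh G X i * gy G X i - gy G (swp i X) (i + 1) * gsh G X i = geh G X i \<and>
        gsh G X i * gy G X (i + 1) - gy G (swp i X) i * gsh G X i = - geh G X i" using V by (elim conjE) assumption
    from this[rule_format, OF SA, of 1] show ?thesis
      by (simp add: A_def ent_def s_def y2_def y_def eh_def swp_def A'eq numeral_2_eq_2)
  qed
  have R8: "e * (y1 + y2) = 0"
  proof -
    have "\<forall>X\<in>Seq r t. \<forall>i B f. (B, f) \<in> step G X (E i) \<longrightarrow>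
        f * (gy G X i + gy G X (i + 1)) = 0 \<and> (gy G B i + gy G B (i + 1)) * f = 0" using V by (elim conjE) assumption
    from this[rule_format, OF SA st_e] show ?thesis by (simp add: y1_def y2_def numeral_2_eq_2)
  qed
  have R4': "\<And>k. e * y1 ^ k * e = c (\<omega> k) * e"
  proof -
    have "\<forall>X\<in>Seq r t. 2 \<le> length X \<and> ent X 1 = 1 \<and> ent X 2 = -1 \<longrightarrow>
        (\<forall>k. ge G X 1 * gy G X 1 ^ k * ge G X 1 = c (\<omega> k) * ge G X 1)" using V by (elim conjE) assumption
    from this[rule_format, OF SA] show "\<And>k. e * y1 ^ k * e = c (\<omega> k) * e"
      by (simp add: A_def ent_def e_def y1_def)
  qed
  have eidm: "e * idm G A = e" using rid[OF SA SA st_e] .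
  have e'eq: "e' = s * e * s'" using R2 R3 by simp
  define X where "X = y2 + e"
  have ys: "y * s = s * X" using R7 R3 by (simp add: X_def algebra_simps eq_neg_iff_add_eq_0)
  have yks: "y ^ k * s = s * X ^ k" for k
  proof (induction k)
    case (Suc k)
    have "y ^ Suc k * s = y * (y ^ k * s)" by (simp add: mult.assoc)
    also have "\<dots> = (y * s) * X ^ k" by (simp add: Suc mult.assoc)
    also have "\<dots> = s * X ^ Suc k" by (simp add: ys mult.assoc)
    finally show ?case .
  qed simp
  have y1pow: "y1 ^ j * y2 = y2 * y1 ^ j" for j
  proof (induction j)
    case (Suc j)
    have "y1 ^ Suc j * y2 = y1 * (y1 ^ j * y2)" by (simp add: mult.assoc)
    also have "\<dots> = (y1 * y2) * y1 ^ j" by (simp add: Suc mult.assoc)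
    also have "\<dots> = y2 * y1 ^ Suc j" by (simp add: R5 mult.assoc)
    finally show ?case .
  qed simp
  have ey2: "e * y2 ^ j = (-1) ^ j * (e * y1 ^ j)" for j
  proof (induction j)
    case (Suc j)
    have ey: "e * y2 = - (e * y1)" using R8 by (simp add: algebra_simps eq_neg_iff_add_eq_0)
    have "e * y2 ^ Suc j = (e * y2 ^ j) * y2" by (simp add: power_commutes mult.assoc)
    also have "\<dots> = (-1) ^ j * (e * (y1 ^ j * y2))" by (simp add: Suc mult.assoc)
    also have "\<dots> = (-1) ^ j * ((e * y2) * y1 ^ j)" by (simp add: y1pow mult.assoc)
    also have "\<dots> = (-1) ^ Suc j * (e * y1 ^ Suc j)" by (simp add: ey power_Suc mult.assoc)
    finally show ?case .
  qed simp
  have cm1: "c (-1) = -1" using add[of "-1" 1] c1 add[of 0 0] by (simp add: eq_neg_iff_add_eq_0)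
  have cpow: "c (a ^ j) = c a ^ j" for a j by (induction j) (simp_all add: c1 mul)
  have ev: "e * y2 ^ j * e = c ((-1) ^ j * \<omega> j) * e" for j
    by (simp add: ey2 mul cpow cm1 mult.assoc R4'[simplified mult.assoc])
  have main: "e * X ^ k * e = c (fps_nth (Wstar_div_u \<omega>) (Suc k)) * e" for k
    by (rule alg_main[OF X_def ev cen _ add mul fps_rec]) simp
  show ?thesis
  proof
    fix m
    show "(if m = 0 then 0 else ge G A' 1 * gy G A' 1 ^ (m - 1) * ge G A' 1)
             = c (fps_nth (Wstar_div_u \<omega>) m) * ge G A' 1"
    proof (cases m)
      case 0
      have "c 0 = 0" using add[of 0 0] by simp
      then show ?thesis using 0 by (simp add: fps_0)
    next
      case (Suc k)
      have "e' * y ^ k * e' = s * e * (s' * (y ^ k * s)) * e * s'"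
        by (simp add: e'eq mult.assoc)
      also have "\<dots> = s * (e * X ^ k * e) * s'"
      proof -
        have eidm': "e * (idm G A * z) = e * z" for z by (simp add: mult.assoc[symmetric] eidm)
        show ?thesis by (simp add: yks mult.assoc[symmetric] R4) (simp add: mult.assoc eidm')
      qed
      also have "\<dots> = c (fps_nth (Wstar_div_u \<omega>) (Suc k)) * e'"
      proof -
        have "s * (e * X ^ k * e) * s' = s * (c (fps_nth (Wstar_div_u \<omega>) (Suc k)) * e) * s'"
          by (simp only: main)
        also have "\<dots> = (s * c (fps_nth (Wstar_div_u \<omega>) (Suc k))) * e * s'"
          by (simp only: mult.assoc)
        also have "\<dots> = c (fps_nth (Wstar_div_u \<omega>) (Suc k)) * (s * e * s')"
          by (simp only: cen[symmetric] mult.assoc)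
        finally show ?thesis by (simp add: e'eq)
      qed
      finally show ?thesis using Suc by (simp add: e'_def y_def)
    qed
  qed
qed

end
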